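(* Let $2\le s\le r$ be integers with $r>2$. For every graph $\Gamma$, we have $$\mathrm{ex}(\Gamma,\mathcal{P}_{K_{s,r}})\ \ge\ \frac{1}{2}\,e(\Gamma)\,\mathrm{ex}(\chi(\overline{\Gamma}),K_{s,r})\Big/\binom{\chi(\overline{\Gamma})}{2}.$$
   Context: For a graph $H$, $\mathcal{P}_H$ is the hereditary property of not containing $H$ as an induced subgraph. For a property $\mathcal{P}$ and a graph $\Gamma$, $\mathrm{ex}(\Gamma,\mathcal{P})$ is the maximum number of edges of a subgraph $G\subseteq\Gamma$ that belongs to $\mathcal{P}$. $\mathrm{ex}(k,K_{s,r})$ is the maximum number of edges of a $k$-vertex graph not containing $K_{s,r}$ as a (not necessarily induced) subgraph. $\overline{\Gamma}$ is the complement of $\Gamma$ and $\chi$ denotes chromatic number. *)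

theory Defs
  imports Complex_Main
begin

definition graph :: "'a set \<Rightarrow> 'a set set \<Rightarrow> bool" where
  "graph V E \<longleftrightarrow> finite V \<and> (\<forall>e\<in>E. e \<subseteq> V \<and> card e = 2)"

definition complement_edges :: "'a set \<Rightarrow> 'a set set \<Rightarrow> 'a set set" where
  "complement_edges V E = {{x, y} | x y. x \<in> V \<and> y \<in> V \<and> x \<noteq> y \<and> {x, y} \<notin> E}"

definition proper_colouring :: "'a set \<Rightarrow> 'a set set \<Rightarrow> nat \<Rightarrow> ('a \<Rightarrow> nat) \<Rightarrow> bool" where
  "proper_colouring V E k f \<longleftrightarrow> f ` V \<subseteq> {..<k} \<and> (\<forall>x y. {x, y} \<in> E \<longrightarrow> f x \<noteq> f y)"

definition chromatic_number :: "'a set \<Rightarrow> 'a set set \<Rightarrow> nat" where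
  "chromatic_number V E = (LEAST k. \<exists>f. proper_colouring V E k f)"

definition has_Ksr :: "nat \<Rightarrow> nat \<Rightarrow> 'a set \<Rightarrow> 'a set set \<Rightarrow> bool" where
  "has_Ksr s r V E \<longleftrightarrow> (\<exists>A B. A \<subseteq> V \<and> B \<subseteq> V \<and> A \<inter> B = {} \<and> card A = s \<and> card B = r
      \<and> (\<forall>a\<in>A. \<forall>b\<in>B. {a, b} \<in> E))"

definition has_induced_Ksr :: "nat \<Rightarrow> nat \<Rightarrow> 'a set \<Rightarrow> 'a set set \<Rightarrow> bool" where
  "has_induced_Ksr s r V E \<longleftrightarrow> (\<exists>A B. A \<subseteq> V \<and> B \<subseteq> V \<and> A \<inter> B = {} \<and> card A = s \<and> card B = r
      \<and> (\<forall>a\<in>A. \<forall>b\<in>B. {a, b} \<in> E)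
      \<and> (\<forall>a\<in>A. \<forall>a'\<in>A. {a, a'} \<notin> E)
      \<and> (\<forall>b\<in>B. \<forall>b'\<in>B. {b, b'} \<notin> E))"

definition ex_Ksr :: "nat \<Rightarrow> nat \<Rightarrow> nat \<Rightarrow> nat" where
  "ex_Ksr k s r = Max {card F | F. graph {..<k} F \<and> \<not> has_Ksr s r {..<k} F}"

text \<open>ex(Gamma, P_{K_{s,r}}): max edges of a subgraph of Gamma with no induced K_{s,r}.
  Subgraphs are taken spanning (same vertex set); since the property is hereditary this loses nothing.\<close>
definition ex_induced_free :: "'a set \<Rightarrow> 'a set set \<Rightarrow> nat \<Rightarrow> nat \<Rightarrow> nat" where
  "ex_induced_free V E s r = Max {card F | F. F \<subseteq> E \<and> \<not> has_induced_Ksr s r V F}"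

end

theory Submission imports Defs "HOL-Combinatorics.Permutations" begin

lemma maxcut:
  assumes "finite W" "\<forall>e\<in>H. e \<subseteq> W \<and> card e = 2"
  shows "\<exists>S. card H \<le> 2 * card {e\<in>H. card (e \<inter> S) = 1}"
  using assms
proof (induction W arbitrary: H rule: finite_induct)
  case empty
  then have "H = {}" by fastforce
  then show ?case by simp
next
  case (insert x W)
  define H0 where "H0 = {e\<in>H. x \<notin> e}"
  define D where "D = {e\<in>H. x \<in> e}"
  have finH: "finite H"
  proof (rule finite_subset)
    show "H \<subseteq> Pow (insert x W)" using insert.prems by auto
  qed (use insert in auto)
  have "\<forall>e\<in>H0. e \<subseteq> W \<and> card e = 2" using insert.prems unfolding H0_def by auto
  then obtain S0 where S0: "card H0 \<le> 2 * card {e\<in>H0. card (e \<inter> S0) = 1}"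
    using insert.IH by blast
  define Sa where "Sa = S0 - {x}"
  define Sb where "Sb = insert x S0"
  let ?c = "\<lambda>S e. (if card (e \<inter> S) = 1 then 1 else 0::nat)"
  have pt0: "?c Sa e + ?c Sb e = 2 * ?c S0 e" if "e \<in> H0" for e
  proof -
    have "e \<inter> Sa = e \<inter> S0" "e \<inter> Sb = e \<inter> S0" using that unfolding H0_def Sa_def Sb_def by auto
    then show ?thesis by simp
  qed
  have pt1: "?c Sa e + ?c Sb e = 1" if "e \<in> D" for e
  proof -
    from that have "e \<in> H" "x \<in> e" unfolding D_def by auto
    then have "card e = 2" using insert.prems by auto
    then obtain y where y: "e = {x, y}" "y \<noteq> x" using \<open>x \<in> e\<close>
      by (metis card_2_iff doubleton_eq_iff insertE singletonD)
    show ?thesis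
    proof (cases "y \<in> S0")
      case True
      then have "e \<inter> Sa = {y}" "e \<inter> Sb = {x, y}" using y unfolding Sa_def Sb_def by auto
      then show ?thesis using y by simp
    next
      case False
      then have "e \<inter> Sa = {}" "e \<inter> Sb = {x}" using y unfolding Sa_def Sb_def by auto
      then show ?thesis by simp
    qed
  qed
  have cardeq: "card {e\<in>A. P e} = (\<Sum>e\<in>A. if P e then 1 else 0)" if "finite A" for A and P :: "'a set \<Rightarrow> bool"
  proof -
    have "{e\<in>A. P e} = A \<inter> Collect P" by auto
    then show ?thesis using that by (simp add: sum.If_cases)
  qed
  have HU: "H = H0 \<union> D" "H0 \<inter> D = {}" unfolding H0_def D_def by auto
  have fin0: "finite H0" "finite D" using finH HU by auto
  have "card {e\<in>H. card (e \<inter> Sa) = 1} + card {e\<in>H. card (e \<inter> Sb) = 1}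
      = (\<Sum>e\<in>H. ?c Sa e + ?c Sb e)"
    using finH by (simp add: cardeq sum.distrib)
  also have "\<dots> = (\<Sum>e\<in>H0. ?c Sa e + ?c Sb e) + (\<Sum>e\<in>D. ?c Sa e + ?c Sb e)"
    using HU fin0 by (simp add: sum.union_disjoint)
  also have "\<dots> = (\<Sum>e\<in>H0. 2 * ?c S0 e) + (\<Sum>e\<in>D. 1)"
    using pt0 pt1 by simp
  also have "\<dots> = 2 * card {e\<in>H0. card (e \<inter> S0) = 1} + card D"
    using fin0 by (simp add: cardeq sum_distrib_left)
  finally have "card {e\<in>H. card (e \<inter> Sa) = 1} + card {e\<in>H. card (e \<inter> Sb) = 1}
     = 2 * card {e\<in>H0. card (e \<inter> S0) = 1} + card D" .
  moreover have "card H = card H0 + card D" using HU fin0 by (simp add: card_Un_disjoint)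
  ultimately have "card H \<le> 2 * card {e\<in>H. card (e \<inter> Sa) = 1} \<or> card H \<le> 2 * card {e\<in>H. card (e \<inter> Sb) = 1}"
    using S0 by linarith
  then show ?case by blast
qed

lemma pair_perm_exists:
  assumes "q \<subseteq> S" "card q = 2" "p \<subseteq> S" "card p = 2"
  shows "\<exists>\<tau>. \<tau> permutes S \<and> \<tau> ` q = p"
proof -
  obtain a b where q: "q = {a, b}" "a \<noteq> b" using assms(2) by (meson card_2_iff)
  obtain c d where p: "p = {c, d}" "c \<noteq> d" using assms(4) by (meson card_2_iff)
  define t1 where "t1 = transpose a c"
  define b' where "b' = t1 b"
  define t2 where "t2 = transpose b' d"
  have abcd: "a \<in> S" "b \<in> S" "c \<in> S" "d \<in> S" using assms q p by auto
  have t1S: "t1 permutes S" unfolding t1_def using abcd by (simp add: permutes_swap_id)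
  have b'S: "b' \<in> S" unfolding b'_def using t1S abcd by (simp add: permutes_in_image)
  have t2S: "t2 permutes S" unfolding t2_def using b'S abcd by (simp add: permutes_swap_id)
  have "t1 a = c" unfolding t1_def by simp
  have "b' \<noteq> c" unfolding b'_def t1_def using q by (auto simp: transpose_def)
  have "t2 (t1 a) = c" unfolding t2_def using \<open>t1 a = c\<close> \<open>b' \<noteq> c\<close> p by (auto simp: transpose_def)
  moreover have "t2 (t1 b) = d" unfolding t2_def b'_def by simp
  ultimately have "(t2 \<circ> t1) ` q = p" using q p by auto
  moreover have "t2 \<circ> t1 permutes S" using t1S t2S by (simp add: permutes_compose)
  ultimately show ?thesis by blast
qed

lemma count_sym:
  assumes "q \<subseteq> S" "card q = 2" "p \<subseteq> S" "card p = 2"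
  shows "card {\<sigma>. \<sigma> permutes S \<and> \<sigma> ` p \<in> H} = card {\<sigma>. \<sigma> permutes S \<and> \<sigma> ` q \<in> H}"
proof -
  obtain \<tau> where \<tau>: "\<tau> permutes S" "\<tau> ` q = p" using pair_perm_exists[OF assms] by blast
  have "bij_betw (\<lambda>\<sigma>. \<sigma> \<circ> \<tau>) {\<sigma>. \<sigma> permutes S \<and> \<sigma> ` p \<in> H} {\<sigma>. \<sigma> permutes S \<and> \<sigma> ` q \<in> H}"
  proof (rule bij_betw_byWitness[where f' = "\<lambda>\<rho>. \<rho> \<circ> inv \<tau>"])
    show "\<forall>a\<in>{\<sigma>. \<sigma> permutes S \<and> \<sigma> ` p \<in> H}. a \<circ> \<tau> \<circ> inv \<tau> = a"
      using permutes_inv_o(1)[OF \<tau>(1)] by (simp add: o_assoc[symmetric])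
    show "\<forall>a\<in>{\<sigma>. \<sigma> permutes S \<and> \<sigma> ` q \<in> H}. a \<circ> inv \<tau> \<circ> \<tau> = a"
      using permutes_inv_o(2)[OF \<tau>(1)] by (simp add: o_assoc[symmetric])
    show "(\<lambda>\<sigma>. \<sigma> \<circ> \<tau>) ` {\<sigma>. \<sigma> permutes S \<and> \<sigma> ` p \<in> H} \<subseteq> {\<sigma>. \<sigma> permutes S \<and> \<sigma> ` q \<in> H}"
      using \<tau> by (auto simp: permutes_compose image_image)
    have "inv \<tau> ` p = q" using \<tau> by (metis image_inv_f_f permutes_inj)
    then show "(\<lambda>\<rho>. \<rho> \<circ> inv \<tau>) ` {\<sigma>. \<sigma> permutes S \<and> \<sigma> ` q \<in> H} \<subseteq> {\<sigma>. \<sigma> permutes S \<and> \<sigma> ` p \<in> H}"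
      using \<tau> by (auto simp: permutes_compose permutes_inv image_image)
  qed
  then show ?thesis by (rule bij_betw_same_card)
qed

lemma count_pairs_image:
  assumes "\<sigma> permutes S" "H \<subseteq> {p. p \<subseteq> S \<and> card p = 2}"
  shows "card {p. (p \<subseteq> S \<and> card p = 2) \<and> \<sigma> ` p \<in> H} = card H"
proof -
  have inj: "inj \<sigma>" using assms(1) by (rule permutes_inj)
  have injv: "inj (inv \<sigma>)" using assms(1) permutes_inv permutes_inj by blast
  have "{p. (p \<subseteq> S \<and> card p = 2) \<and> \<sigma> ` p \<in> H} = (\<lambda>e. inv \<sigma> ` e) ` H"
  proof (intro set_eqI iffI)
    fix p assume "p \<in> {p. (p \<subseteq> S \<and> card p = 2) \<and> \<sigma> ` p \<in> H}"
    then have "\<sigma> ` p \<in> H" by auto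
    moreover have "p = inv \<sigma> ` (\<sigma> ` p)" using inj by (simp add: image_inv_f_f)
    ultimately show "p \<in> (\<lambda>e. inv \<sigma> ` e) ` H" by blast
  next
    fix p assume "p \<in> (\<lambda>e. inv \<sigma> ` e) ` H"
    then obtain e where e: "e \<in> H" "p = inv \<sigma> ` e" by auto
    have "\<sigma> ` p = e" using e permutes_surj[OF assms(1)] by (simp add: image_f_inv_f)
    moreover have "card p = 2" using e assms(2) injv by (auto simp: card_image inj_on_subset)
    moreover have "p \<subseteq> S" using e assms(2) permutes_image[OF permutes_inv[OF assms(1)]] by auto
    ultimately show "p \<in> {p. (p \<subseteq> S \<and> card p = 2) \<and> \<sigma> ` p \<in> H}" using e by auto
  qed
  moreover have "inj_on (\<lambda>e. inv \<sigma> ` e) H" using injv by (meson inj_image_eq_iff inj_onI)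
  ultimately show ?thesis by (simp add: card_image)
qed

lemma perm_pair_count:
  fixes H :: "nat set set"
  assumes H: "H \<subseteq> {p. p \<subseteq> {..<k} \<and> card p = 2}" and q: "q \<subseteq> {..<k}" "card q = 2"
  shows "card {\<sigma>. \<sigma> permutes {..<k} \<and> \<sigma> ` q \<in> H} * (k choose 2) = fact k * card H"
proof -
  define Pairs where "Pairs = {p. p \<subseteq> {..<k} \<and> card p = 2}"
  define P where "P = {\<sigma>. \<sigma> permutes {..<k}}"
  have cP: "card Pairs = k choose 2" unfolding Pairs_def using n_subsets[of "{..<k}" 2] by simp
  have finP: "finite P" unfolding P_def by (simp add: finite_permutations)
  have cardP: "card P = fact k" unfolding P_def by (simp add: card_permutations)
  have finPairs: "finite Pairs" unfolding Pairs_def by (rule finite_subset[of _ "Pow {..<k}"]) auto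
  have cardeq: "card {e\<in>A. Q e} = (\<Sum>e\<in>A. if Q e then 1 else 0)" if "finite A" for A and Q :: "'b \<Rightarrow> bool"
  proof -
    have "{e\<in>A. Q e} = A \<inter> Collect Q" by auto
    then show ?thesis using that by (simp add: sum.If_cases)
  qed
  have "(\<Sum>p\<in>Pairs. card {\<sigma>\<in>P. \<sigma> ` p \<in> H}) = (\<Sum>p\<in>Pairs. card {\<sigma>\<in>P. \<sigma> ` q \<in> H})"
  proof (rule sum.cong)
    fix p assume "p \<in> Pairs"
    then show "card {\<sigma>\<in>P. \<sigma> ` p \<in> H} = card {\<sigma>\<in>P. \<sigma> ` q \<in> H}"
      unfolding P_def Pairs_def using count_sym[OF q] by auto
  qed simp
  also have "\<dots> = (k choose 2) * card {\<sigma>\<in>P. \<sigma> ` q \<in> H}" using cP by simp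
  finally have 1: "(\<Sum>p\<in>Pairs. card {\<sigma>\<in>P. \<sigma> ` p \<in> H}) = (k choose 2) * card {\<sigma>\<in>P. \<sigma> ` q \<in> H}" .
  have "(\<Sum>p\<in>Pairs. card {\<sigma>\<in>P. \<sigma> ` p \<in> H}) = (\<Sum>p\<in>Pairs. \<Sum>\<sigma>\<in>P. if \<sigma> ` p \<in> H then 1 else 0)"
    using finP by (simp add: cardeq)
  also have "\<dots> = (\<Sum>\<sigma>\<in>P. \<Sum>p\<in>Pairs. if \<sigma> ` p \<in> H then 1 else 0)" by (rule sum.swap)
  also have "\<dots> = (\<Sum>\<sigma>\<in>P. card {p\<in>Pairs. \<sigma> ` p \<in> H})" using finPairs by (simp add: cardeq)
  also have "\<dots> = (\<Sum>\<sigma>\<in>P. card H)"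
  proof (rule sum.cong)
    fix \<sigma> assume "\<sigma> \<in> P"
    then show "card {p\<in>Pairs. \<sigma> ` p \<in> H} = card H"
      using count_pairs_image[OF _ H] unfolding P_def Pairs_def by simp
  qed simp
  also have "\<dots> = fact k * card H" using cardP by simp
  finally show ?thesis using 1 unfolding P_def by (simp add: mult.commute)
qed

lemma induced_free_main:
  fixes V :: "'a set" and E :: "'a set set" and f :: "'a \<Rightarrow> nat"
  assumes fclq: "\<And>x y. x \<in> V \<Longrightarrow> y \<in> V \<Longrightarrow> x \<noteq> y \<Longrightarrow> f x = f y \<Longrightarrow> {x, y} \<in> E"
    and fV: "\<And>x. x \<in> V \<Longrightarrow> f x < k"
    and Hfree: "\<not> has_Ksr s r {..<k} H"
    and sig: "\<sigma> permutes {..<k}"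
    and H'def: "H' = {e\<in>H. card (e \<inter> S) = 1}"
    and Hg: "graph {..<k} H"
    and s2: "2 \<le> s" and r3: "r > 2"
  shows "\<not> has_induced_Ksr s r V {e\<in>E. card (f ` e) = 1 \<or> \<sigma> ` (f ` e) \<in> H'}"
proof
  define F where "F = {e\<in>E. card (f ` e) = 1 \<or> \<sigma> ` (f ` e) \<in> H'}"
  assume "has_induced_Ksr s r V {e\<in>E. card (f ` e) = 1 \<or> \<sigma> ` (f ` e) \<in> H'}"
  then obtain A B where AB: "A \<subseteq> V" "B \<subseteq> V" "A \<inter> B = {}" "card A = s" "card B = r"
    and ABe: "\<forall>a\<in>A. \<forall>b\<in>B. {a, b} \<in> F"
    and AA: "\<forall>a\<in>A. \<forall>a'\<in>A. {a, a'} \<notin> F"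
    and BB: "\<forall>b\<in>B. \<forall>b'\<in>B. {b, b'} \<notin> F"
    unfolding has_induced_Ksr_def F_def by blast
  have finA: "finite A" using AB s2 by (metis card.infinite not_numeral_le_zero)
  have finB: "finite B" using AB r3 by (metis card.infinite not_less_zero)
  have Fedge: "f x = f y \<or> {\<sigma> (f x), \<sigma> (f y)} \<in> H'" if "{x, y} \<in> F" for x y
  proof -
    have "card {f x, f y} = 1 \<or> {\<sigma> (f x), \<sigma> (f y)} \<in> H'" using that unfolding F_def by auto
    then show ?thesis by (cases "f x = f y") auto
  qed
  have Fin: "{x, y} \<in> F" if "x \<in> V" "y \<in> V" "x \<noteq> y" "f x = f y" for x y
    using fclq[OF that] that(4) unfolding F_def by auto
  have injA: "a = a'" if "a \<in> A" "a' \<in> A" "f a = f a'" for a a'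
    using AA Fin that AB by blast
  have injB: "b = b'" if "b \<in> B" "b' \<in> B" "f b = f b'" for b b'
    using BB Fin that AB by blast
  have Hside: "u \<in> S \<longleftrightarrow> v \<notin> S" if "{u, v} \<in> H'" for u v
  proof -
    have c2: "card {u, v} = 2" using that Hg unfolding H'def graph_def by auto
    then have "u \<noteq> v" by (metis card_2_iff doubleton_eq_iff insert_absorb2)
    have "card ({u, v} \<inter> S) = 1" using that unfolding H'def by auto
    then show ?thesis using \<open>u \<noteq> v\<close> by (cases "u \<in> S"; cases "v \<in> S") auto
  qed
  have injs: "inj \<sigma>" using sig by (rule permutes_inj)
  show False
  proof (cases "\<exists>a\<in>A. \<exists>b\<in>B. f a = f b")
    case True
    then obtain a b where ab: "a \<in> A" "b \<in> B" "f a = f b" by blast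
    have "\<not> card A \<le> Suc 0" using AB s2 by simp
    then obtain a' where a': "a' \<in> A" "a' \<noteq> a" using finA ab card_le_Suc0_iff_eq by metis
    have "\<not> card (B - {b}) \<le> Suc 0" using AB r3 ab finB by simp
    then obtain b1 b2 where b12: "b1 \<in> B - {b}" "b2 \<in> B - {b}" "b1 \<noteq> b2"
      using finB card_le_Suc0_iff_eq by (metis finite_Diff)
    have fa': "f a' \<noteq> f b" using injA a' ab by metis
    have s1: "\<sigma> (f a') \<in> S \<longleftrightarrow> \<sigma> (f b) \<notin> S"
      using Fedge[of a' b] ABe a' ab fa' Hside by blast
    have key: "f a' = f bi" if bi: "bi \<in> B - {b}" for bi
    proof (rule ccontr)
      assume ne: "f a' \<noteq> f bi"
      have fbi: "f a \<noteq> f bi" using injB bi ab by auto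
      have s2': "\<sigma> (f a) \<in> S \<longleftrightarrow> \<sigma> (f bi) \<notin> S"
        using Fedge[of a bi] ABe bi ab fbi Hside by blast
      have s3: "\<sigma> (f a') \<in> S \<longleftrightarrow> \<sigma> (f bi) \<notin> S"
        using Fedge[of a' bi] ABe bi a' ne Hside by blast
      show False using s1 s2' s3 ab by auto
    qed
    have "f b1 = f b2" using key b12 by metis
    then show False using injB b12 by auto
  next
    case False
    define A' where "A' = (\<sigma> \<circ> f) ` A"
    define B' where "B' = (\<sigma> \<circ> f) ` B"
    have "card A' = s" unfolding A'_def using AB(4) injA injs
      by (metis card_image comp_inj_on inj_onI inj_on_subset subset_UNIV)
    moreover have "card B' = r" unfolding B'_def using AB(5) injB injs
      by (metis card_image comp_inj_on inj_onI inj_on_subset subset_UNIV)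
    moreover have "A' \<subseteq> {..<k}" "B' \<subseteq> {..<k}" unfolding A'_def B'_def
      using AB fV permutes_in_image[OF sig] by auto
    moreover have "A' \<inter> B' = {}" unfolding A'_def B'_def using False injs
      by (auto dest: injD)
    moreover have "\<forall>a\<in>A'. \<forall>b\<in>B'. {a, b} \<in> H"
      unfolding A'_def B'_def using False Fedge ABe H'def by fastforce
    ultimately have "has_Ksr s r {..<k} H" unfolding has_Ksr_def by blast
    then show False using Hfree by simp
  qed
qed

lemma cardeq_sum: "finite A \<Longrightarrow> card {e\<in>A. Q e} = (\<Sum>e\<in>A. if Q e then 1 else 0)"
proof -
  assume "finite A"
  have "{e\<in>A. Q e} = A \<inter> Collect Q" by auto
  then show ?thesis using \<open>finite A\<close> by (simp add: sum.If_cases)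
qed

theorem lemma1p4:
  fixes V :: "'a set" and E :: "'a set set" and s r :: nat
  assumes "graph V E" and "2 \<le> s" and "s \<le> r" and "r > 2"
  shows "real (ex_induced_free V E s r) \<ge>
    (1/2) * real (card E) * real (ex_Ksr (chromatic_number V (complement_edges V E)) s r)
      / real (chromatic_number V (complement_edges V E) choose 2)"
proof -
  define k where "k = chromatic_number V (complement_edges V E)"
  have finV: "finite V" using assms(1) unfolding graph_def by auto
  have EV: "E \<subseteq> Pow V" using assms(1) unfolding graph_def by auto
  have finE: "finite E" using finV EV finite_subset by blast
  have E2: "\<And>e. e \<in> E \<Longrightarrow> card e = 2 \<and> e \<subseteq> V" using assms(1) unfolding graph_def by auto
  define X where "X = {card F | F. F \<subseteq> E \<and> \<not> has_induced_Ksr s r V F}"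
  have finX: "finite X" unfolding X_def
    by (rule finite_subset[of _ "card ` Pow E"]) (use finE in auto)
  have exge: "card F \<le> ex_induced_free V E s r" if "F \<subseteq> E" "\<not> has_induced_Ksr s r V F" for F
    unfolding ex_induced_free_def using finX that unfolding X_def by (auto intro: Max_ge)
  show ?thesis
  proof (cases "k < 2")
    case True
    then have kc: "k choose 2 = 0" by simp
    show ?thesis unfolding k_def[symmetric] kc by simp
  next
    case False
    then have k2: "k \<ge> 2" by simp
    have ex0: "\<exists>f. proper_colouring V (complement_edges V E) (card V) f"
    proof -
      obtain h where h: "bij_betw h V {0..<card V}" using ex_bij_betw_finite_nat[OF finV] by blast
      have "proper_colouring V (complement_edges V E) (card V) h"
        unfolding proper_colouring_def complement_edges_def
      proof (intro conjI allI impI)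
        show "h ` V \<subseteq> {..<card V}" using h by (auto simp: bij_betw_def)
      next
        fix x y assume "{x, y} \<in> {{x, y} |x y. x \<in> V \<and> y \<in> V \<and> x \<noteq> y \<and> {x, y} \<notin> E}"
        then obtain x' y' where "{x, y} = {x', y'}" "x' \<in> V" "y' \<in> V" "x' \<noteq> y'" by blast
        then have "x \<in> V" "y \<in> V" "x \<noteq> y" by (auto simp: doubleton_eq_iff)
        then show "h x \<noteq> h y" using h by (auto simp: bij_betw_def inj_on_def)
      qed
      then show ?thesis by blast
    qed
    have "\<exists>f. proper_colouring V (complement_edges V E) k f"
      unfolding k_def chromatic_number_def by (rule LeastI_ex) (use ex0 in blast)
    then obtain f where pc: "proper_colouring V (complement_edges V E) k f" by blast
    have fV: "\<And>x. x \<in> V \<Longrightarrow> f x < k" using pc unfolding proper_colouring_def by auto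
    have fclq: "{x, y} \<in> E" if "x \<in> V" "y \<in> V" "x \<noteq> y" "f x = f y" for x y
    proof (rule ccontr)
      assume "{x, y} \<notin> E"
      then have "{x, y} \<in> complement_edges V E" unfolding complement_edges_def using that by blast
      then show False using pc that unfolding proper_colouring_def by blast
    qed
    define Y where "Y = {card F | F. graph {..<k} F \<and> \<not> has_Ksr s r {..<k} F}"
    have finY: "finite Y" unfolding Y_def
      by (rule finite_subset[of _ "card ` Pow (Pow {..<k})"]) (auto simp: graph_def)
    have "\<not> has_Ksr s r {..<k} {}"
    proof
      assume "has_Ksr s r {..<k} {}"
      then obtain A B where "card A = s" "card B = r" "\<forall>a\<in>A. \<forall>b\<in>B. {a, b} \<in> ({}::nat set set)"
        unfolding has_Ksr_def by blast
      moreover have "A \<noteq> {}" "B \<noteq> {}" using calculation assms by auto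
      ultimately show False by blast
    qed
    then have "0 \<in> Y" unfolding Y_def graph_def by force
    then have "Max Y \<in> Y" using finY by (metis Max_in empty_iff)
    then obtain H where Hg: "graph {..<k} H" and Hfree: "\<not> has_Ksr s r {..<k} H"
      and Hc: "card H = ex_Ksr k s r" unfolding Y_def ex_Ksr_def by auto
    obtain S where S: "card H \<le> 2 * card {e\<in>H. card (e \<inter> S) = 1}"
      using maxcut[of "{..<k}" H] Hg unfolding graph_def by auto
    define H' where "H' = {e\<in>H. card (e \<inter> S) = 1}"
    have H'P: "H' \<subseteq> {p. p \<subseteq> {..<k} \<and> card p = 2}" using Hg unfolding H'_def graph_def by auto
    define q :: "nat set" where "q = {0, 1}"
    have q: "q \<subseteq> {..<k}" "card q = 2" unfolding q_def using k2 by auto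
    define P where "P = {\<sigma>. \<sigma> permutes {..<k}}"
    define N where "N = card {\<sigma>\<in>P. \<sigma> ` q \<in> H'}"
    have finP: "finite P" unfolding P_def by (simp add: finite_permutations)
    have cardP: "card P = fact k" unfolding P_def by (simp add: card_permutations)
    have NC: "N * (k choose 2) = fact k * card H'"
      using perm_pair_count[OF H'P q] unfolding N_def P_def by simp
    define Fs where "Fs = (\<lambda>\<sigma>. {e\<in>E. card (f ` e) = 1 \<or> \<sigma> ` (f ` e) \<in> H'})"
    have cnt: "N \<le> card {\<sigma>\<in>P. e \<in> Fs \<sigma>}" if eE: "e \<in> E" for e
    proof -
      obtain x y where xy: "e = {x, y}" "x \<noteq> y" using E2[OF eE] by (meson card_2_iff)
      have xyV: "x \<in> V" "y \<in> V" using E2[OF eE] xy by auto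
      show ?thesis
      proof (cases "f x = f y")
        case True
        then have "{\<sigma>\<in>P. e \<in> Fs \<sigma>} = P" unfolding Fs_def using that xy by auto
        moreover have "N \<le> card P" unfolding N_def using finP by (intro card_mono) auto
        ultimately show ?thesis by simp
      next
        case False
        have pe: "f ` e \<subseteq> {..<k}" "card (f ` e) = 2" using xy xyV fV False by auto
        have "{\<sigma>\<in>P. e \<in> Fs \<sigma>} = {\<sigma>\<in>P. \<sigma> ` (f ` e) \<in> H'}" unfolding Fs_def using that pe by auto
        then show ?thesis unfolding N_def P_def using count_sym[OF q pe] by simp
      qed
    qed
    have "(\<Sum>\<sigma>\<in>P. card (Fs \<sigma>)) = (\<Sum>\<sigma>\<in>P. \<Sum>e\<in>E. if e \<in> Fs \<sigma> then 1 else 0)"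
    proof (rule sum.cong)
      fix \<sigma> assume "\<sigma> \<in> P"
      have "Fs \<sigma> = {e\<in>E. e \<in> Fs \<sigma>}" unfolding Fs_def by auto
      then show "card (Fs \<sigma>) = (\<Sum>e\<in>E. if e \<in> Fs \<sigma> then 1 else 0)"
        using cardeq_sum[OF finE, of "\<lambda>e. e \<in> Fs \<sigma>"] by simp
    qed simp
    also have "\<dots> = (\<Sum>e\<in>E. \<Sum>\<sigma>\<in>P. if e \<in> Fs \<sigma> then 1 else 0)" by (rule sum.swap)
    also have "\<dots> = (\<Sum>e\<in>E. card {\<sigma>\<in>P. e \<in> Fs \<sigma>})" using finP by (simp add: cardeq_sum)
    also have "\<dots> \<ge> (\<Sum>e\<in>E. N)" using cnt by (intro sum_mono) auto
    finally have sumge: "card E * N \<le> (\<Sum>\<sigma>\<in>P. card (Fs \<sigma>))" by simp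
    have "P \<noteq> {}" unfolding P_def using permutes_id by blast
    have "\<exists>\<sigma>\<in>P. card E * N \<le> card (Fs \<sigma>) * card P"
    proof (rule ccontr)
      assume "\<not> ?thesis"
      then have "\<forall>\<sigma>\<in>P. card (Fs \<sigma>) * card P < card E * N" by auto
      then have "(\<Sum>\<sigma>\<in>P. card (Fs \<sigma>) * card P) < (\<Sum>\<sigma>\<in>P. card E * N)"
        using finP \<open>P \<noteq> {}\<close> by (intro sum_strict_mono) auto
      then have "(\<Sum>\<sigma>\<in>P. card (Fs \<sigma>)) * card P < card P * (card E * N)"
        by (simp add: sum_distrib_right)
      then show False using sumge by (simp add: mult.commute)
    qed
    then obtain \<sigma> where sig: "\<sigma> \<in> P" and big: "card E * N \<le> card (Fs \<sigma>) * fact k"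
      using cardP by auto
    have nind: "\<not> has_induced_Ksr s r V (Fs \<sigma>)"
      unfolding Fs_def
      by (rule induced_free_main[OF fclq fV Hfree _ H'_def Hg assms(2) assms(4)])
         (use sig P_def in auto)
    have le1: "card (Fs \<sigma>) \<le> ex_induced_free V E s r"
      using exge[OF _ nind] unfolding Fs_def by auto
    have Cpos: "k choose 2 > 0" using k2 by simp
    have fpos: "fact k > (0::nat)" by simp
    have "card E * N * (k choose 2) \<le> card (Fs \<sigma>) * fact k * (k choose 2)"
      using big by simp
    moreover have "fact k * (card E * card H') = card E * N * (k choose 2)"
    proof -
      have "fact k * (card E * card H') = card E * (fact k * card H')" by (simp add: ac_simps)
      also have "\<dots> = card E * (N * (k choose 2))" using NC by simp
      also have "\<dots> = card E * N * (k choose 2)" by (simp add: mult.assoc)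
      finally show ?thesis .
    qed
    moreover have "card (Fs \<sigma>) * fact k * (k choose 2) = fact k * (card (Fs \<sigma>) * (k choose 2))"
      by (simp add: algebra_simps)
    ultimately have "fact k * (card E * card H') \<le> fact k * (card (Fs \<sigma>) * (k choose 2))"
      by (simp only:)
    then have cancel: "card E * card H' \<le> card (Fs \<sigma>) * (k choose 2)" using fpos by (metis mult_le_cancel1)
    have "card E * card H \<le> 2 * (card (Fs \<sigma>) * (k choose 2))"
    proof -
      have "card E * card H \<le> card E * (2 * card H')" using S unfolding H'_def by simp
      also have "\<dots> = 2 * (card E * card H')" by simp
      also have "\<dots> \<le> 2 * (card (Fs \<sigma>) * (k choose 2))" using cancel by simp
      finally show ?thesis .
    qed
    then have "card E * ex_Ksr k s r \<le> 2 * card (Fs \<sigma>) * (k choose 2)" using Hc by simp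
    moreover have "2 * card (Fs \<sigma>) * (k choose 2) \<le> 2 * ex_induced_free V E s r * (k choose 2)"
      using le1 by simp
    ultimately have "card E * ex_Ksr k s r \<le> 2 * ex_induced_free V E s r * (k choose 2)" by (rule le_trans)
    then have "real (card E * ex_Ksr k s r) \<le> real (2 * ex_induced_free V E s r * (k choose 2))"
      by (simp only: of_nat_le_iff)
    then have "real (card E) * real (ex_Ksr k s r) \<le> 2 * real (ex_induced_free V E s r) * real (k choose 2)"
      by (simp only: of_nat_mult of_nat_numeral)
    then have "(1/2) * real (card E) * real (ex_Ksr k s r) / real (k choose 2) \<le> real (ex_induced_free V E s r)"
      using Cpos by (simp add: field_simps)
    then show ?thesis unfolding k_def by simp
  qed
qed

end
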